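(* Let $p$ be a prime with $\gcd(p,6)=1$ and $m\ge 1$. The number $C_R(\mathbb{Z}_{p^m})$ of isomorphism classes of nonsingular reduced Weierstrass elliptic curves over $\mathbb{Z}_{p^m}$ is $$C_R(\mathbb{Z}_{p^m})=\begin{cases}2p^m+6 & p\equiv 1 \pmod{12},\\ 2p^m+2 & p\equiv 5\pmod{12},\\ 2p^m+4 & p\equiv 7\pmod{12},\\ 2p^m & p\equiv 11\pmod{12}.\end{cases}$$
   Context: A reduced Weierstrass curve over $\mathbb{Z}_{n}$ is $y^2=x^3+ax+b$ with $(a,b)\in\mathbb{Z}_{n}^2$; it is nonsingular iff $\Delta=-16(4a^3+27b^2)$ is a unit in $\mathbb{Z}_{n}$. Two such curves with coefficients $(a,b)$ and $(\bar a,\bar b)$ are isomorphic iff there is $u\in\mathbb{Z}_{n}^*$ with $\bar a=u^{-4}a$ and $\bar b=u^{-6}b$ (i.e. related by the change of variables $(x,y)\mapsto(u^2x,u^3y)$). $C_R(\mathbb{Z}_n)$ denotes the number of isomorphism classes of nonsingular reduced curves over $\mathbb{Z}_n$. *)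

theory Defs
  imports "HOL-Number_Theory.Number_Theory"
begin

text \<open>Z_n is modelled by the residues {0..<n} (as int), arithmetic mod n.\<close>

definition units_mod :: "int \<Rightarrow> int set" where
  "units_mod n = {u. 0 \<le> u \<and> u < n \<and> coprime u n}"

text \<open>Reduced Weierstrass curve y^2 = x^3 + a x + b over Z_n, coefficients (a,b).\<close>
definition nonsingular_reduced :: "int \<Rightarrow> int \<times> int \<Rightarrow> bool" where
  "nonsingular_reduced n ab = (case ab of (a, b) \<Rightarrow>
      coprime ((-16 * (4 * a^3 + 27 * b^2)) mod n) n)"

definition reduced_curves :: "int \<Rightarrow> (int \<times> int) set" where
  "reduced_curves n = {(a, b). 0 \<le> a \<and> a < n \<and> 0 \<le> b \<and> b < n \<and> nonsingular_reduced n (a, b)}"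

definition curve_iso :: "int \<Rightarrow> ((int \<times> int) \<times> (int \<times> int)) set" where
  "curve_iso n = {((a, b), (a', b')). (a, b) \<in> reduced_curves n \<and> (a', b') \<in> reduced_curves n \<and>
      (\<exists>u \<in> units_mod n. [a = u^4 * a'] (mod n) \<and> [b = u^6 * b'] (mod n))}"

definition C_R :: "int \<Rightarrow> nat" where
  "C_R n = card (reduced_curves n // curve_iso n)"

end

theory Submission
  imports Defs
begin



lemma card_dvd_mult:
  fixes ph d :: nat assumes "ph > 0" "d > 0"
  shows "card {i. i < ph \<and> ph dvd i * d} = gcd d ph"
proof -
  define g where "g = gcd d ph"
  define q where "q = ph div g"
  define e where "e = d div g"
  have gpos: "g > 0" using assms g_def by simp
  have ph: "ph = q * g" using q_def g_def by simp
  have d: "d = e * g" using e_def g_def by simp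
  have cop: "coprime q e" unfolding q_def e_def g_def
    using div_gcd_coprime[of ph d] assms by (simp add: gcd.commute coprime_commute)
  have qpos: "q > 0" using ph assms by simp
  have "\<And>i. ph dvd i * d \<longleftrightarrow> q dvd i"
  proof -
    fix i
    have "ph dvd i * d \<longleftrightarrow> q * g dvd (i * e) * g" using ph d by (simp add: mult.assoc)
    also have "\<dots> \<longleftrightarrow> q dvd i * e" using gpos by simp
    also have "\<dots> \<longleftrightarrow> q dvd i" using cop by (simp add: coprime_dvd_mult_left_iff)
    finally show "ph dvd i * d \<longleftrightarrow> q dvd i" .
  qed
  hence "{i. i < ph \<and> ph dvd i * d} = (\<lambda>j. q * j) ` {..<g}"
    using ph qpos by (auto elim!: dvdE)
  moreover have "inj_on (\<lambda>j. q * j) {..<g}" using qpos by (auto simp: inj_on_def)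
  ultimately show ?thesis using g_def by (simp add: card_image)
qed

lemma card_roots_primroot:
  fixes N g d :: nat
  assumes "N > 1" "residue_primroot N g" "d > 0"
  shows "card {k \<in> totatives N. [k ^ d = 1] (mod N)} = gcd d (totient N)"
proof -
  have bij: "bij_betw (\<lambda>i. g ^ i mod N) {..<totient N} (totatives N)"
    using residue_primroot_is_generator[OF assms(1,2)] .
  have ordg: "ord N g = totient N" using assms(2) by (simp add: residue_primroot_def)
  have "{k \<in> totatives N. [k ^ d = 1] (mod N)} = (\<lambda>i. g ^ i mod N) ` {i \<in> {..<totient N}. [(g ^ i mod N) ^ d = 1] (mod N)}"
    using bij unfolding bij_betw_def by auto
  moreover have "inj_on (\<lambda>i. g ^ i mod N) {i \<in> {..<totient N}. [(g ^ i mod N) ^ d = 1] (mod N)}"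
    using bij unfolding bij_betw_def by (auto intro: inj_on_subset)
  ultimately have "card {k \<in> totatives N. [k ^ d = 1] (mod N)} = card {i \<in> {..<totient N}. [(g ^ i mod N) ^ d = 1] (mod N)}"
    by (simp add: card_image)
  also have "{i \<in> {..<totient N}. [(g ^ i mod N) ^ d = 1] (mod N)} = {i. i < totient N \<and> totient N dvd i * d}"
  proof -
    have "\<And>i. [(g ^ i mod N) ^ d = 1] (mod N) \<longleftrightarrow> totient N dvd i * d"
    proof -
      fix i
      have "[(g ^ i mod N) ^ d = 1] (mod N) \<longleftrightarrow> [g ^ (i * d) = 1] (mod N)"
        by (simp add: cong_def power_mod power_mult)
      also have "\<dots> \<longleftrightarrow> ord N g dvd i * d" by (rule ord_divides)
      finally show "?thesis i" using ordg by simp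
    qed
    thus ?thesis by auto
  qed
  also have "card \<dots> = gcd d (totient N)"
    using card_dvd_mult[of "totient N" d] assms by simp
  finally show ?thesis .
qed

lemma units_mod_int:
  fixes N :: nat assumes "N > 1"
  shows "units_mod (int N) = int ` totatives N"
proof
  show "units_mod (int N) \<subseteq> int ` totatives N"
  proof
    fix u assume u: "u \<in> units_mod (int N)"
    hence u0: "0 \<le> u" "u < int N" "coprime u (int N)" by (auto simp: units_mod_def)
    have "u \<noteq> 0" using u0 assms by auto
    moreover have "coprime (nat u) N" using u0
      by (metis coprime_int_iff int_nat_eq)
    ultimately show "u \<in> int ` totatives N" using u0
      by (intro image_eqI[of _ _ "nat u"]) (auto simp: in_totatives_iff)
  qed
next
  show "int ` totatives N \<subseteq> units_mod (int N)"
  proof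
    fix u assume "u \<in> int ` totatives N"
    then obtain k where k: "k \<in> totatives N" "u = int k" by auto
    have "k \<noteq> N" using k assms by (auto simp: in_totatives_iff)
    thus "u \<in> units_mod (int N)" using k by (auto simp: units_mod_def in_totatives_iff)
  qed
qed

lemma card_roots_units:
  fixes p :: int and m d :: nat
  assumes "prime p" "odd p" "m \<ge> 1" "d > 0"
  shows "card {u \<in> units_mod (p ^ m). [u ^ d = 1] (mod p ^ m)} = gcd d (totient (nat p ^ m))"
proof -
  define P where "P = nat p"
  have pP: "p = int P" using prime_gt_0_int[OF assms(1)] P_def by simp
  have Pprime: "prime P" using assms pP by simp
  have Podd: "odd P" using assms pP by simp
  obtain g where g: "\<forall>k>0. residue_primroot (P ^ k) g"
    using residue_primroot_odd_prime_power_exists[OF Pprime Podd] by blast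
  define N where "N = P ^ m"
  have N1: "N > 1" using assms Pprime N_def prime_gt_1_nat
    by (metis One_nat_def Suc_le_eq less_one nat_power_less_imp_less not_less_iff_gr_or_eq one_less_power)
  have gN: "residue_primroot N g" using g assms N_def by simp
  have pm: "p ^ m = int N" using pP N_def by simp
  have "{u \<in> units_mod (p ^ m). [u ^ d = 1] (mod p ^ m)} = int ` {k \<in> totatives N. [k ^ d = 1] (mod N)}"
    unfolding pm units_mod_int[OF N1]
    by (auto simp: cong_int_iff[symmetric])
  hence "card {u \<in> units_mod (p ^ m). [u ^ d = 1] (mod p ^ m)} = card {k \<in> totatives N. [k ^ d = 1] (mod N)}"
    by (simp add: card_image)
  also have "\<dots> = gcd d (totient N)" using card_roots_primroot[OF N1 gN assms(4)] .
  finally show ?thesis using N_def P_def by simp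
qed




lemma cop_pm:
  fixes p x :: int assumes "prime p" "m \<ge> 1"
  shows "coprime x (p ^ m) \<longleftrightarrow> \<not> p dvd x"
proof -
  have "coprime x (p ^ m) \<longleftrightarrow> coprime x p" using assms by simp
  also have "\<dots> \<longleftrightarrow> coprime p x" by (rule coprime_commute)
  also have "\<dots> \<longleftrightarrow> \<not> p dvd x"
  proof
    assume c: "coprime p x" show "\<not> p dvd x"
    proof
      assume "p dvd x"
      hence "is_unit p" using coprime_common_divisor[OF c] by simp
      thus False using assms(1) not_prime_unit by blast
    qed
  next
    assume "\<not> p dvd x" thus "coprime p x" using assms(1) prime_imp_coprime by blast
  qed
  finally show ?thesis .
qed
    
lemma small_dvd_eq:
  fixes p t s :: int assumes "0 \<le> t" "t < p" "0 \<le> s" "s < p" "p dvd t - s"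
  shows "t = s"
  using assms cong_less_imp_eq_int[of t p s] by (simp add: cong_iff_dvd_diff)

lemma p23:
  fixes p :: int assumes p: "prime p" "coprime p 6"
  shows "\<not> p dvd 2 \<and> \<not> p dvd 3"
proof -
  have "\<not> p dvd 6"
  proof
    assume h: "p dvd 6"
    have "is_unit p" by (rule coprime_common_divisor[OF p(2) _ h]) simp
    thus False using p(1) not_prime_unit by blast
  qed
  thus ?thesis using dvd_mult2[of p 2 3] dvd_mult2[of p 3 2] by auto
qed

lemma S1_card:
  fixes p :: int assumes p: "prime p" "coprime p 6"
  shows "card {(a, b). 0 \<le> a \<and> a < p \<and> 0 \<le> b \<and> b < p \<and> p dvd 4 * a^3 + 27 * b^2} = nat p"
proof -
  define S1 where "S1 = {(a, b). 0 \<le> a \<and> a < p \<and> 0 \<le> b \<and> b < p \<and> p dvd 4 * a^3 + 27 * b^2}"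
  define f where "f = (\<lambda>t::int. ((-3 * t^2) mod p, (2 * t^3) mod p))"
  have p0: "p > 0" using p prime_gt_0_int by blast
  have n2: "\<not> p dvd 2" and n3: "\<not> p dvd 3" using p23[OF p] by auto
  have inj: "inj_on f {0..<p}"
  proof (rule inj_onI)
    fix t s assume t: "t \<in> {0..<p}" and s: "s \<in> {0..<p}" and e: "f t = f s"
    have "p dvd (-3 * t^2) - (-3 * s^2)" using e unfolding f_def
      by (intro mod_eq_dvd_iff[THEN iffD1]) simp
    moreover have "(-3 * t^2) - (-3 * s^2) = - (3 * (t^2 - s^2))" by (simp add: algebra_simps)
    ultimately have c1: "p dvd 3 * (t^2 - s^2)" by (metis dvd_minus_iff)
    have c2: "p dvd 2 * (t^3 - s^3)" using e unfolding f_def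
      by (simp add: mod_eq_dvd_iff algebra_simps)
    have d1: "p dvd t^2 - s^2" using c1 n3 p prime_dvd_mult_iff by blast
    have d2: "p dvd t^3 - s^3" using c2 n2 p prime_dvd_mult_iff by blast
    show "t = s"
    proof (cases "p dvd t")
      case True
      hence "p dvd t^3" using p by (simp add: prime_dvd_power_iff)
      hence "p dvd t^3 - (t^3 - s^3)" using d2 by (rule dvd_diff)
      hence "p dvd s^3" by simp
      hence "p dvd s" using p prime_dvd_power by blast
      hence "p dvd t - s" using True by (rule dvd_diff[rotated])
      thus "t = s" using t s small_dvd_eq[of t p s] by auto
    next
      case False
      have "t^2 * (t - s) = (t^3 - s^3) - s * (t^2 - s^2)" by (simp add: algebra_simps power2_eq_square power3_eq_cube)
      hence "p dvd t^2 * (t - s)" using d1 d2 by simp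
      moreover have "\<not> p dvd t^2" using False p prime_dvd_power by blast
      ultimately have "p dvd t - s" using p by (simp add: prime_dvd_mult_iff)
      thus "t = s" using t s small_dvd_eq[of t p s] by auto
    qed
  qed
  have img: "f ` {0..<p} = S1"
  proof
    show "f ` {0..<p} \<subseteq> S1"
    proof
      fix x assume "x \<in> f ` {0..<p}"
      then obtain t where x: "x = f t" by auto
      have "4 * (-3 * t^2)^3 + 27 * (2 * t^3)^2 = 0" by (simp add: algebra_simps power2_eq_square power3_eq_cube)
      moreover have "[4 * ((-3 * t^2) mod p)^3 + 27 * ((2 * t^3) mod p)^2 = 4 * (-3 * t^2)^3 + 27 * (2 * t^3)^2] (mod p)"
        by (intro cong_add cong_mult cong_pow) (simp_all add: cong_def)
      ultimately have "[4 * ((-3 * t^2) mod p)^3 + 27 * ((2 * t^3) mod p)^2 = 0] (mod p)" by simp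
      thus "x \<in> S1" using x p0 unfolding f_def S1_def by (simp add: cong_0_iff)
    qed
  next
    show "S1 \<subseteq> f ` {0..<p}"
    proof
      fix x assume x: "x \<in> S1"
      then obtain a b where ab: "x = (a, b)" "0 \<le> a" "a < p" "0 \<le> b" "b < p" "p dvd 4 * a^3 + 27 * b^2"
        unfolding S1_def by auto
      show "x \<in> f ` {0..<p}"
      proof (cases "a = 0")
        case True
        hence "p dvd 27 * b^2" using ab by simp
        moreover have "\<not> p dvd 27"
        proof
          assume "p dvd 27" hence "p dvd (3::int)^3" by simp
          thus False using n3 p prime_dvd_power by blast
        qed
        ultimately have "p dvd b^2" using p by (simp add: prime_dvd_mult_iff)
        hence "p dvd b" using p prime_dvd_power by blast
        hence "b = 0" using ab small_dvd_eq[of b p 0] p0 by simp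
        thus ?thesis using True ab p0 unfolding f_def by (auto intro!: image_eqI[of _ _ 0])
      next
        case False
        have "\<not> p dvd a" using False ab small_dvd_eq[of a p 0] p0 by auto
        hence "\<not> p dvd 2 * a" using n2 p by (simp add: prime_dvd_mult_iff)
        hence "coprime p (2 * a)" using p(1) by (rule prime_imp_coprime[rotated])
        hence "coprime (2 * a) p" by (simp add: coprime_commute)
        then obtain i where i: "[2 * a * i = 1] (mod p)" using cong_solve_coprime_int by blast
        hence di: "p dvd 2 * a * i - 1" by (simp add: cong_iff_dvd_diff)
        define t where "t = (-3 * b * i) mod p"
        have tc: "[t = -3 * b * i] (mod p)" unfolding t_def by simp
        have "[-3 * t^2 = -3 * (-3 * b * i)^2] (mod p)" using tc by (intro cong_mult cong_pow) auto
        moreover have "[-3 * (-3 * b * i)^2 = a] (mod p)"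
        proof -
          have "-3 * (-3 * b * i)^2 - a = (4 * a^3 + 27 * b^2) * (- (i^2)) + a * (2 * a * i + 1) * (2 * a * i - 1)"
            by (simp add: algebra_simps power2_eq_square power3_eq_cube)
          hence "p dvd -3 * (-3 * b * i)^2 - a" using ab di by simp
          thus ?thesis by (simp add: cong_iff_dvd_diff)
        qed
        ultimately have ca: "[-3 * t^2 = a] (mod p)" by (rule cong_trans)
        have "[2 * t^3 = 2 * (-3 * b * i)^3] (mod p)" using tc by (intro cong_mult cong_pow) auto
        moreover have "[2 * (-3 * b * i)^3 = b] (mod p)"
        proof -
          have "2 * (-3 * b * i)^3 - b = (4 * a^3 + 27 * b^2) * (- 2 * b * i^3) + b * (2 * a * i - 1) * ((2 * a * i)^2 + 2 * a * i + 1)"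
            by (simp add: algebra_simps power2_eq_square power3_eq_cube)
          hence "p dvd 2 * (-3 * b * i)^3 - b" using ab di by simp
          thus ?thesis by (simp add: cong_iff_dvd_diff)
        qed
        ultimately have cb: "[2 * t^3 = b] (mod p)" by (rule cong_trans)
        have "f t = (a, b)" unfolding f_def using ca cb ab by (simp add: cong_def)
        moreover have "t \<in> {0..<p}" unfolding t_def using p0 by simp
        ultimately show ?thesis using ab by (metis image_eqI)
      qed
    qed
  qed
  have "card S1 = card {0..<p}" using img inj card_image by fastforce
  thus ?thesis unfolding S1_def by simp
qed




lemma lift_card:
  fixes p :: int assumes p1: "p > 1" and m: "m \<ge> 1" and T: "T \<subseteq> {0..<p} \<times> {0..<p}"
  shows "int (card {(a, b). 0 \<le> a \<and> a < p ^ m \<and> 0 \<le> b \<and> b < p ^ m \<and> (a mod p, b mod p) \<in> T})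
         = int (card T) * p ^ (2 * (m - 1))"
proof -
  define q where "q = p ^ (m - 1)"
  have pm: "p ^ m = p * q" using m unfolding q_def by (cases m) auto
  have q0: "q > 0" using p1 unfolding q_def by simp
  define S where "S = {(a, b). 0 \<le> a \<and> a < p ^ m \<and> 0 \<le> b \<and> b < p ^ m \<and> (a mod p, b mod p) \<in> T}"
  define f where "f = (\<lambda>(a::int, b::int). ((a mod p, b mod p), (a div p, b div p)))"
  define g where "g = (\<lambda>((r::int, s::int), (i::int, j::int)). (r + p * i, s + p * j))"
  have divb: "0 \<le> a div p \<and> a div p < q" if "0 \<le> a" "a < p * q" for a
  proof -
    have "a div p * p \<le> a" using p1 by (metis div_mult_mod_eq le_add_same_cancel1 pos_mod_sign zero_less_one less_trans)
    hence "a div p * p < q * p" using that by (simp add: mult.commute)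
    hence "a div p < q" using p1 by (simp add: mult_less_cancel_right)
    moreover have "0 \<le> a div p" using that p1 by (simp add: pos_imp_zdiv_nonneg_iff)
    ultimately show ?thesis by simp
  qed
  have gb: "0 \<le> r + p * i \<and> r + p * i < p * q" if "0 \<le> r" "r < p" "0 \<le> i" "i < q" for r i
  proof -
    have "p * i \<le> p * (q - 1)" using that p1 by (intro mult_left_mono) auto
    thus ?thesis using that p1 by (simp add: algebra_simps)
  qed
  have modr: "(r + p * i) mod p = r" and divr: "(r + p * i) div p = i" if "0 \<le> r" "r < p" for r i
    using that p1 by (simp_all add: mod_pos_pos_trivial div_pos_pos_trivial)
  have bij: "bij_betw f S (T \<times> ({0..<q} \<times> {0..<q}))"
  proof (rule bij_betw_byWitness[where f' = g])
    show "\<forall>x\<in>S. g (f x) = x" unfolding S_def f_def g_def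
      by (auto simp: mult.commute[of p] )
    show "\<forall>y\<in>T \<times> ({0..<q} \<times> {0..<q}). f (g y) = y"
    proof
      fix y assume "y \<in> T \<times> ({0..<q} \<times> {0..<q})"
      then obtain r s i j where y: "y = ((r, s), (i, j))" "(r, s) \<in> T" by auto
      have "0 \<le> r" "r < p" "0 \<le> s" "s < p" using y T by auto
      thus "f (g y) = y" unfolding y f_def g_def using modr divr by simp
    qed
    show "f ` S \<subseteq> T \<times> ({0..<q} \<times> {0..<q})"
      unfolding S_def f_def using divb pm by auto
    show "g ` (T \<times> ({0..<q} \<times> {0..<q})) \<subseteq> S"
    proof
      fix x assume "x \<in> g ` (T \<times> ({0..<q} \<times> {0..<q}))"
      then obtain r s i j where x: "x = g ((r, s), (i, j))" "(r, s) \<in> T" "i \<in> {0..<q}" "j \<in> {0..<q}" by auto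
      have rs: "0 \<le> r" "r < p" "0 \<le> s" "s < p" using x T by auto
      show "x \<in> S" unfolding S_def x g_def using rs x modr gb pm by auto
    qed
  qed
  have "card S = card T * (card {0..<q} * card {0..<q})"
    using bij_betw_same_card[OF bij] by (simp add: card_cartesian_product)
  hence "int (card S) = int (card T) * (q * q)" using q0 by simp
  moreover have "q * q = p ^ (2 * (m - 1))" 
  proof -
    have "2 * (m - 1) = (m - 1) + (m - 1)" by simp
    thus ?thesis unfolding q_def by (simp only: power_add)
  qed
  ultimately show ?thesis unfolding S_def by simp
qed

lemma nonsing_iff:
  fixes p :: int assumes p: "prime p" "coprime p 6" and m: "m \<ge> 1"
  shows "nonsingular_reduced (p ^ m) (a, b) \<longleftrightarrow> \<not> p dvd 4 * a^3 + 27 * b^2"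
proof -
  have n0: "p ^ m \<noteq> 0" using p prime_gt_0_int by simp
  have n2: "\<not> p dvd 2" using p23[OF p] by simp
  have n16: "\<not> p dvd 16"
  proof
    assume "p dvd 16" hence "p dvd (2::int)^4" by simp
    thus False using n2 p prime_dvd_power by blast
  qed
  have "nonsingular_reduced (p ^ m) (a, b) \<longleftrightarrow> coprime (-16 * (4 * a^3 + 27 * b^2)) (p ^ m)"
    unfolding nonsingular_reduced_def prod.case by (rule coprime_mod_left_iff[OF n0])
  also have "\<dots> \<longleftrightarrow> \<not> p dvd (-16 * (4 * a^3 + 27 * b^2))" using cop_pm[OF p(1) m] .
  also have "\<dots> \<longleftrightarrow> \<not> p dvd (16 * (4 * a^3 + 27 * b^2))"
    using dvd_minus_iff[of p "16 * (4 * a^3 + 27 * b^2)"] by (simp only: mult_minus_left)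
  also have "\<dots> \<longleftrightarrow> \<not> p dvd (4 * a^3 + 27 * b^2)" using n16 p prime_dvd_mult_iff by blast
  finally show ?thesis .
qed

lemma card_R:
  fixes p :: int assumes p: "prime p" "coprime p 6" and m: "m \<ge> 1"
  shows "int (card (reduced_curves (p ^ m))) = p ^ (2 * m - 1) * (p - 1)"
proof -
  have p1: "p > 1" using p prime_gt_1_int by blast
  define E where "E = (\<lambda>a b::int. 4 * a^3 + 27 * b^2)"
  define Box where "Box = {(a, b). 0 \<le> a \<and> a < p ^ m \<and> 0 \<le> b \<and> b < p ^ m}"
  define S1 where "S1 = {(a, b). 0 \<le> a \<and> a < p \<and> 0 \<le> b \<and> b < p \<and> p dvd 4 * a^3 + 27 * b^2}"
  have R: "reduced_curves (p ^ m) = {x \<in> Box. \<not> p dvd E (fst x) (snd x)}"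
    unfolding reduced_curves_def Box_def E_def using nonsing_iff[OF p m] by auto
  have ES: "p dvd E a b \<longleftrightarrow> (a mod p, b mod p) \<in> S1" for a b
  proof -
    have "[E a b = E (a mod p) (b mod p)] (mod p)" unfolding E_def
      by (intro cong_add cong_mult cong_pow) (simp_all add: cong_def)
    hence "p dvd E a b \<longleftrightarrow> p dvd E (a mod p) (b mod p)" by (rule cong_dvd_iff)
    thus ?thesis unfolding S1_def E_def using p1 by simp
  qed
  have S: "{x \<in> Box. p dvd E (fst x) (snd x)} = {(a, b). 0 \<le> a \<and> a < p ^ m \<and> 0 \<le> b \<and> b < p ^ m \<and> (a mod p, b mod p) \<in> S1}"
    unfolding Box_def using ES by auto
  have T: "S1 \<subseteq> {0..<p} \<times> {0..<p}" unfolding S1_def by auto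
  have cS: "int (card {x \<in> Box. p dvd E (fst x) (snd x)}) = p * p ^ (2 * (m - 1))"
    unfolding S using lift_card[OF p1 m T] S1_card[OF p] S1_def p1 by simp
  have fin: "finite Box" unfolding Box_def
    by (rule finite_subset[of _ "{0..<p^m} \<times> {0..<p^m}"]) auto
  have "Box = {0..<p^m} \<times> {0..<p^m}" unfolding Box_def by auto
  hence cB: "int (card Box) = p ^ m * p ^ m" using p1 by simp
  have "card Box = card {x \<in> Box. \<not> p dvd E (fst x) (snd x)} + card {x \<in> Box. p dvd E (fst x) (snd x)}"
    using fin by (subst card_Un_disjoint[symmetric]) (auto intro: arg_cong[where f = card])
  hence "int (card (reduced_curves (p ^ m))) = p ^ m * p ^ m - p * p ^ (2 * (m - 1))"
    using R cB cS by simp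
  also have "\<dots> = p ^ (2 * m - 1) * (p - 1)"
  proof -
    obtain k where k: "m = Suc k" using m by (cases m) auto
    have e1: "2 * m - 1 = Suc (k + k)" and e2: "2 * (m - 1) = k + k" using k by auto
    show ?thesis unfolding e1 e2 unfolding k by (simp add: power_add algebra_simps)
  qed
  finally show ?thesis .
qed




lemma count_classes:
  fixes A :: "'a set" and Cl :: "'a \<Rightarrow> 'a set"
  assumes fin: "finite A" and self: "\<And>x. x \<in> A \<Longrightarrow> x \<in> Cl x"
    and sub: "\<And>x. x \<in> A \<Longrightarrow> Cl x \<subseteq> A"
    and same: "\<And>x y. x \<in> A \<Longrightarrow> y \<in> Cl x \<Longrightarrow> Cl y = Cl x"
  shows "real (card (Cl ` A)) = (\<Sum>x\<in>A. 1 / real (card (Cl x)))"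
proof -
  have "(\<Sum>x\<in>A. 1 / real (card (Cl x))) = (\<Sum>C\<in>Cl ` A. \<Sum>x\<in>{x \<in> A. Cl x = C}. 1 / real (card (Cl x)))"
    using fin by (rule sum.image_gen)
  also have "\<dots> = (\<Sum>C\<in>Cl ` A. 1)"
  proof (rule sum.cong)
    fix C assume "C \<in> Cl ` A"
    then obtain x0 where x0: "x0 \<in> A" "C = Cl x0" by auto
    have eq: "{x \<in> A. Cl x = C} = C"
    proof
      show "{x \<in> A. Cl x = C} \<subseteq> C" using self by auto
      show "C \<subseteq> {x \<in> A. Cl x = C}"
      proof
        fix y assume y: "y \<in> C"
        have "y \<in> A" using y x0 sub by blast
        moreover have "Cl y = C" using same[OF x0(1)] y x0(2) by simp
        ultimately show "y \<in> {x \<in> A. Cl x = C}" by simp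
      qed
    qed
    have finC: "finite C" using x0 sub[OF x0(1)] fin by (simp add: finite_subset)
    have neC: "C \<noteq> {}" using x0 self by auto
    have "(\<Sum>x\<in>{x \<in> A. Cl x = C}. 1 / real (card (Cl x))) = (\<Sum>x\<in>C. 1 / real (card C))"
      by (rule sum.cong) (use eq in auto)
    also have "\<dots> = 1" using finC neC by simp
    finally show "(\<Sum>x\<in>{x \<in> A. Cl x = C}. 1 / real (card (Cl x))) = 1" .
  qed simp
  finally show ?thesis by simp
qed

definition act :: "int \<Rightarrow> int \<Rightarrow> int \<times> int \<Rightarrow> int \<times> int" where
  "act n u x = ((u^4 * fst x) mod n, (u^6 * snd x) mod n)"

lemma units_one: "n > 1 \<Longrightarrow> 1 \<in> units_mod n"
  by (simp add: units_mod_def)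

lemma units_mult: "n > 1 \<Longrightarrow> u \<in> units_mod n \<Longrightarrow> v \<in> units_mod n \<Longrightarrow> (u * v) mod n \<in> units_mod n"
  by (auto simp: units_mod_def)

lemma units_inv:
  assumes "n > 1" "u \<in> units_mod n"
  obtains v where "v \<in> units_mod n" "(u * v) mod n = 1" "(v * u) mod n = 1"
proof -
  have "coprime u n" using assms by (simp add: units_mod_def)
  then obtain w where w: "[u * w = 1] (mod n)" using cong_solve_coprime_int by blast
  define v where "v = w mod n"
  have "(u * v) mod n = 1" unfolding v_def using w assms(1)
    by (simp add: cong_def mod_mult_right_eq)
  moreover have "coprime v n"
  proof -
    have "coprime (u * w) n" using w cong_imp_coprime[of 1 "u*w" n] by (simp add: cong_sym)
    hence "coprime w n" by simp
    thus ?thesis unfolding v_def using assms(1) by simp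
  qed
  moreover have "0 \<le> v" "v < n" unfolding v_def using assms(1) by auto
  ultimately show ?thesis using that by (auto simp: units_mod_def mult.commute)
qed

lemma pow_mod_mult: "((w mod n)^k * a) mod n = (w^k * a) mod (n::int)"
proof -
  have "((w mod n)^k * a) mod n = (((w mod n)^k mod n) * a) mod n" by (simp add: mod_mult_left_eq)
  also have "\<dots> = ((w^k mod n) * a) mod n" by (simp add: power_mod)
  also have "\<dots> = (w^k * a) mod n" by (simp add: mod_mult_left_eq)
  finally show ?thesis .
qed

lemma act_mult: "act n ((u * v) mod n) x = act n u (act n v x)"
  unfolding act_def by (simp add: pow_mod_mult mod_mult_right_eq power_mult_distrib mult.assoc)

lemma act_one: "n > 0 \<Longrightarrow> 0 \<le> fst x \<Longrightarrow> fst x < n \<Longrightarrow> 0 \<le> snd x \<Longrightarrow> snd x < n \<Longrightarrow> act n 1 x = x"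
  unfolding act_def by (cases x) simp

lemma act_R:
  assumes n: "n > 1" and x: "x \<in> reduced_curves n" and u: "u \<in> units_mod n"
  shows "act n u x \<in> reduced_curves n"
proof -
  obtain a b where ab: "x = (a, b)" by (cases x)
  have D: "coprime (-16 * (4 * a^3 + 27 * b^2)) n" using x ab n
    by (simp add: reduced_curves_def nonsingular_reduced_def)
  have cu: "coprime u n" using u by (simp add: units_mod_def)
  have "[-16 * (4 * ((u^4 * a) mod n)^3 + 27 * ((u^6 * b) mod n)^2) = -16 * (4 * (u^4 * a)^3 + 27 * (u^6 * b)^2)] (mod n)"
    by (intro cong_add cong_mult cong_pow) (simp_all add: cong_def)
  moreover have "-16 * (4 * (u^4 * a)^3 + 27 * (u^6 * b)^2) = u^12 * (-16 * (4 * a^3 + 27 * b^2))"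
    by (simp add: algebra_simps power_mult_distrib power_mult[symmetric])
  moreover have "coprime (u^12 * (-16 * (4 * a^3 + 27 * b^2))) n" using D cu by simp
  ultimately have "coprime (-16 * (4 * ((u^4 * a) mod n)^3 + 27 * ((u^6 * b) mod n)^2)) n"
    using cong_imp_coprime cong_sym by metis
  thus ?thesis unfolding act_def ab using n
    by (simp add: reduced_curves_def nonsingular_reduced_def)
qed

lemma iso_iff:
  assumes n: "n > 1"
  shows "(x, y) \<in> curve_iso n \<longleftrightarrow> x \<in> reduced_curves n \<and> y \<in> reduced_curves n \<and> (\<exists>u\<in>units_mod n. x = act n u y)"
proof -
  obtain a b where x: "x = (a, b)" by (cases x)
  obtain a' b' where y: "y = (a', b')" by (cases y)
  have "x \<in> reduced_curves n \<Longrightarrow> [a = u^4 * a'] (mod n) \<and> [b = u^6 * b'] (mod n) \<longleftrightarrow> x = act n u y" for u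
    unfolding x y act_def by (auto simp: reduced_curves_def cong_def)
  thus ?thesis unfolding curve_iso_def x y by auto
qed


definition orb :: "int \<Rightarrow> int \<times> int \<Rightarrow> (int \<times> int) set" where
  "orb n x = (\<lambda>u. act n u x) ` units_mod n"

definition stab :: "int \<Rightarrow> int \<times> int \<Rightarrow> int set" where
  "stab n x = {u \<in> units_mod n. act n u x = x}"

lemma R_box: "x \<in> reduced_curves n \<Longrightarrow> 0 \<le> fst x \<and> fst x < n \<and> 0 \<le> snd x \<and> snd x < n"
  by (auto simp: reduced_curves_def)

lemma finite_units: "finite (units_mod n)"
  by (rule finite_subset[of _ "{0..<n}"]) (auto simp: units_mod_def)

lemma class_eq:
  assumes n: "n > 1" and x: "x \<in> reduced_curves n"
  shows "curve_iso n `` {x} = orb n x"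
proof
  show "curve_iso n `` {x} \<subseteq> orb n x"
  proof
    fix y assume "y \<in> curve_iso n `` {x}"
    hence "(x, y) \<in> curve_iso n" by simp
    then obtain u where u: "u \<in> units_mod n" "x = act n u y" and yR: "y \<in> reduced_curves n"
      using iso_iff[OF n] by blast
    obtain v where v: "v \<in> units_mod n" "(v * u) mod n = 1" using units_inv[OF n u(1)] by metis
    have "act n v x = act n ((v * u) mod n) y" using u by (simp add: act_mult)
    also have "\<dots> = y" using v act_one[of n y] R_box[OF yR] n by simp
    finally show "y \<in> orb n x" unfolding orb_def using v by (metis image_eqI)
  qed
next
  show "orb n x \<subseteq> curve_iso n `` {x}"
  proof
    fix y assume "y \<in> orb n x"
    then obtain u where u: "u \<in> units_mod n" "y = act n u x" unfolding orb_def by auto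
    have yR: "y \<in> reduced_curves n" using act_R[OF n x u(1)] u by simp
    obtain v where v: "v \<in> units_mod n" "(v * u) mod n = 1" using units_inv[OF n u(1)] by metis
    have "act n v y = act n ((v * u) mod n) x" using u by (simp add: act_mult)
    also have "\<dots> = x" using v act_one[of n x] R_box[OF x] n by simp
    finally have "(x, y) \<in> curve_iso n" using iso_iff[OF n] x yR v by metis
    thus "y \<in> curve_iso n `` {x}" by simp
  qed
qed

lemma orbit_stab:
  assumes n: "n > 1" and x: "x \<in> reduced_curves n"
  shows "card (orb n x) * card (stab n x) = card (units_mod n)"
proof -
  define f where "f = (\<lambda>u. act n u x)"
  have "card (units_mod n) = (\<Sum>u\<in>units_mod n. 1)" by simp
  also have "\<dots> = (\<Sum>y\<in>f ` units_mod n. \<Sum>u\<in>{u \<in> units_mod n. f u = y}. 1)"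
    using finite_units by (rule sum.image_gen)
  also have "\<dots> = (\<Sum>y\<in>f ` units_mod n. card (stab n x))"
  proof (rule sum.cong)
    fix y assume "y \<in> f ` units_mod n"
    then obtain u0 where u0: "u0 \<in> units_mod n" "y = f u0" by auto
    obtain v0 where v0: "v0 \<in> units_mod n" "(v0 * u0) mod n = 1" "(u0 * v0) mod n = 1"
      using units_inv[OF n u0(1)] by metis
    have x1: "act n 1 x = x" using act_one[of n x] R_box[OF x] n by simp
    have "bij_betw (\<lambda>v. (u0 * v) mod n) (stab n x) {u \<in> units_mod n. f u = y}"
    proof (rule bij_betw_byWitness[where f' = "\<lambda>w. (v0 * w) mod n"])
      show "\<forall>a\<in>stab n x. (v0 * ((u0 * a) mod n)) mod n = a"
      proof
        fix a assume a: "a \<in> stab n x"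
        have "(v0 * ((u0 * a) mod n)) mod n = ((v0 * u0) * a) mod n" by (simp add: mod_mult_right_eq mult.assoc)
        also have "\<dots> = (((v0 * u0) mod n) * a) mod n" by (simp add: mod_mult_left_eq)
        also have "\<dots> = a" using v0 a by (simp add: stab_def units_mod_def)
        finally show "(v0 * ((u0 * a) mod n)) mod n = a" .
      qed
      show "\<forall>a\<in>{u \<in> units_mod n. f u = y}. (u0 * ((v0 * a) mod n)) mod n = a"
      proof
        fix a assume a: "a \<in> {u \<in> units_mod n. f u = y}"
        have "(u0 * ((v0 * a) mod n)) mod n = ((u0 * v0) * a) mod n" by (simp add: mod_mult_right_eq mult.assoc)
        also have "\<dots> = (((u0 * v0) mod n) * a) mod n" by (simp add: mod_mult_left_eq)
        also have "\<dots> = a" using v0 a by (simp add: units_mod_def)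
        finally show "(u0 * ((v0 * a) mod n)) mod n = a" .
      qed
      show "(\<lambda>v. (u0 * v) mod n) ` stab n x \<subseteq> {u \<in> units_mod n. f u = y}"
      proof
        fix w assume "w \<in> (\<lambda>v. (u0 * v) mod n) ` stab n x"
        then obtain a where a: "a \<in> stab n x" "w = (u0 * a) mod n" by auto
        have "w \<in> units_mod n" using a u0 units_mult[OF n] by (simp add: stab_def)
        moreover have "f w = y" unfolding f_def a(2) act_mult using a u0 f_def by (simp add: stab_def)
        ultimately show "w \<in> {u \<in> units_mod n. f u = y}" by simp
      qed
      show "(\<lambda>w. (v0 * w) mod n) ` {u \<in> units_mod n. f u = y} \<subseteq> stab n x"
      proof
        fix w assume "w \<in> (\<lambda>w. (v0 * w) mod n) ` {u \<in> units_mod n. f u = y}"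
        then obtain a where a: "a \<in> units_mod n" "f a = y" "w = (v0 * a) mod n" by auto
        have "w \<in> units_mod n" using a v0 units_mult[OF n] by simp
        moreover have "act n w x = x"
        proof -
          have "act n w x = act n v0 (act n u0 x)" unfolding a(3) act_mult using a u0 f_def by simp
          also have "\<dots> = act n ((v0 * u0) mod n) x" by (simp add: act_mult)
          also have "\<dots> = x" using v0 x1 by simp
          finally show ?thesis .
        qed
        ultimately show "w \<in> stab n x" by (simp add: stab_def)
      qed
    qed
    thus "(\<Sum>u\<in>{u \<in> units_mod n. f u = y}. 1) = card (stab n x)"
      by (simp add: bij_betw_same_card)
  qed simp
  also have "\<dots> = card (orb n x) * card (stab n x)" unfolding orb_def f_def by simp
  finally show ?thesis by simp
qed




locale pm_setup =
  fixes p :: int and m :: nat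
  assumes p: "prime p" and p6: "coprime p 6" and m: "m \<ge> 1"
begin

abbreviation "n \<equiv> p ^ m"

lemma n1: "n > 1"
proof -
  have "p > 1" using p prime_gt_1_int by blast
  thus ?thesis using m by (simp add: one_less_power)
qed

lemma n2: "\<not> p dvd 2" and n3: "\<not> p dvd 3" using p23[OF p p6] by auto

lemma helper: "n dvd X * Y \<Longrightarrow> \<not> p dvd Y \<Longrightarrow> n dvd X"
proof -
  assume a: "n dvd X * Y" "\<not> p dvd Y"
  have "coprime Y n" using cop_pm[OF p m] a(2) by simp
  hence "coprime n Y" by (simp add: coprime_commute)
  thus "n dvd X" using a(1) coprime_dvd_mult_left_iff by blast
qed

lemma R_not_both: "(a, b) \<in> reduced_curves n \<Longrightarrow> \<not> (p dvd a \<and> p dvd b)"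
proof
  assume R: "(a, b) \<in> reduced_curves n" and d: "p dvd a \<and> p dvd b"
  have "\<not> p dvd 4 * a^3 + 27 * b^2" using R nonsing_iff[OF p p6 m] by (simp add: reduced_curves_def)
  moreover have "p dvd 4 * a^3 + 27 * b^2" using d by (simp add: power2_eq_square power3_eq_cube)
  ultimately show False by contradiction
qed

lemma stab_iff:
  assumes x: "(a, b) \<in> reduced_curves n" and u: "u \<in> units_mod n"
  shows "u \<in> stab n (a, b) \<longleftrightarrow> [u^4 * a = a] (mod n) \<and> [u^6 * b = b] (mod n)"
  using x u R_box[OF x] by (auto simp: stab_def act_def cong_def)

lemma stab_b0:
  assumes x: "(a, 0) \<in> reduced_curves n"
  shows "stab n (a, 0) = {u \<in> units_mod n. [u^4 = 1] (mod n)}"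
proof -
  have "\<not> p dvd a" using R_not_both[OF x] by simp
  hence ca: "coprime a n" using cop_pm[OF p m] by simp
  have "[u^4 * a = a] (mod n) \<longleftrightarrow> [u^4 = 1] (mod n)" for u
    using cong_mult_rcancel[OF ca, of "u^4" 1] by simp
  thus ?thesis using stab_iff[OF x] by (auto simp: stab_def)
qed

lemma stab_a0:
  assumes x: "(0, b) \<in> reduced_curves n"
  shows "stab n (0, b) = {u \<in> units_mod n. [u^6 = 1] (mod n)}"
proof -
  have "\<not> p dvd b" using R_not_both[OF x] by simp
  hence cb: "coprime b n" using cop_pm[OF p m] by simp
  have "[u^6 * b = b] (mod n) \<longleftrightarrow> [u^6 = 1] (mod n)" for u
    using cong_mult_rcancel[OF cb, of "u^6" 1] by simp
  thus ?thesis using stab_iff[OF x] by (auto simp: stab_def)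
qed

lemma stab_gen:
  assumes x: "(a, b) \<in> reduced_curves n" and a0: "a \<noteq> 0" and b0: "b \<noteq> 0"
  shows "stab n (a, b) = {u \<in> units_mod n. [u^2 = 1] (mod n)}"
proof -
  have box: "0 \<le> a" "a < n" "0 \<le> b" "b < n" using R_box[OF x] by auto
  have na: "\<not> n dvd a" using box a0 zdvd_imp_le by fastforce
  have nb: "\<not> n dvd b" using box b0 zdvd_imp_le by fastforce
  have "[u^4 * a = a] (mod n) \<and> [u^6 * b = b] (mod n) \<longleftrightarrow> [u^2 = 1] (mod n)" for u
  proof
    assume h: "[u^4 * a = a] (mod n) \<and> [u^6 * b = b] (mod n)"
    hence h1: "n dvd u^4 * a - a" and h2: "n dvd u^6 * b - b" by (auto simp: cong_iff_dvd_diff)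
    show "[u^2 = 1] (mod n)"
    proof (cases "p dvd a")
      case False
      have "n dvd (u^4 - 1) * a" using h1 by (simp add: algebra_simps)
      hence d4: "n dvd u^4 - 1" using helper False by blast
      have "u^6 * b - b = (u^4 - 1) * (u^2 * b) + (u^2 - 1) * b" by (simp add: algebra_simps power_add[symmetric])
      hence "n dvd (u^2 - 1) * b" using h2 d4
        by (metis dvd_add_right_iff dvd_mult2)
      show ?thesis
      proof (cases "p dvd u^2 - 1")
        case True
        have "\<not> p dvd u^2 + 1"
        proof
          assume "p dvd u^2 + 1"
          hence "p dvd (u^2 + 1) - (u^2 - 1)" using True by (rule dvd_diff)
          thus False using n2 by simp
        qed
        moreover have "n dvd (u^2 - 1) * (u^2 + 1)" using d4 by (simp add: algebra_simps power_add[symmetric])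
        ultimately have "n dvd u^2 - 1" using helper by blast
        thus ?thesis by (simp add: cong_iff_dvd_diff)
      next
        case False
        hence "n dvd b" using helper[of b "u^2 - 1"] \<open>n dvd (u^2 - 1) * b\<close> by (simp add: mult.commute)
        thus ?thesis using nb by contradiction
      qed
    next
      case True
      hence pb: "\<not> p dvd b" using R_not_both[OF x] by simp
      have "n dvd (u^6 - 1) * b" using h2 by (simp add: algebra_simps)
      hence d6: "n dvd u^6 - 1" using helper pb by blast
      have "(u^2 - 1) * a = (u^6 - 1) * a - u^2 * (u^4 * a - a)" by (simp add: algebra_simps power_add[symmetric])
      moreover have "n dvd (u^6 - 1) * a - u^2 * (u^4 * a - a)"
      proof (rule dvd_diff)
        show "n dvd (u^6 - 1) * a" using d6 by (rule dvd_mult2)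
        show "n dvd u^2 * (u^4 * a - a)" using h1 by (rule dvd_mult)
      qed
      ultimately have "n dvd (u^2 - 1) * a" by simp
      show ?thesis
      proof (cases "p dvd u^2 - 1")
        case True
        have "\<not> p dvd u^4 + u^2 + 1"
        proof
          assume "p dvd u^4 + u^2 + 1"
          moreover have "p dvd (u^2 - 1) * (u^2 + 2)" using True by simp
          ultimately have "p dvd (u^4 + u^2 + 1) - (u^2 - 1) * (u^2 + 2)" by (rule dvd_diff)
          moreover have "(u^4 + u^2 + 1) - (u^2 - 1) * (u^2 + 2) = 3" by (simp add: algebra_simps power_add[symmetric])
          ultimately show False using n3 by simp
        qed
        moreover have "n dvd (u^2 - 1) * (u^4 + u^2 + 1)" using d6 by (simp add: algebra_simps power_add[symmetric])
        ultimately have "n dvd u^2 - 1" using helper by blast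
        thus ?thesis by (simp add: cong_iff_dvd_diff)
      next
        case False
        hence "n dvd a" using helper[of a "u^2 - 1"] \<open>n dvd (u^2 - 1) * a\<close> by (simp add: mult.commute)
        thus ?thesis using na by contradiction
      qed
    qed
  next
    assume h: "[u^2 = 1] (mod n)"
    have "[(u^2)^2 = 1^2] (mod n)" "[(u^2)^3 = 1^3] (mod n)" using h by (simp_all only: cong_pow)
    moreover have "(u^2)^2 = u^4" "(u^2)^3 = u^6" by (simp_all flip: power_mult)
    ultimately have c4: "[u^4 = 1] (mod n)" and c6: "[u^6 = 1] (mod n)" by simp_all
    have "[u^4 * a = 1 * a] (mod n)" "[u^6 * b = 1 * b] (mod n)" using c4 c6 cong_refl by (blast intro: cong_mult)+
    thus "[u^4 * a = a] (mod n) \<and> [u^6 * b = b] (mod n)" by simp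
  qed
  thus ?thesis using stab_iff[OF x] by (auto simp: stab_def)
qed




end




context pm_setup begin

definition P where "P = nat p"

lemma pP: "p = int P" using prime_gt_0_int[OF p] by (simp add: P_def)

lemma Pprime: "prime P" using prime_nat_int_transfer[of P] p pP by argo

lemma oddp: "odd p"
proof
  assume "even p"
  hence "is_unit (2::int)" using coprime_common_divisor[OF p6, of 2] by simp
  thus False by simp
qed

definition cnt :: "nat \<Rightarrow> nat" where
  "cnt d = card {u \<in> units_mod n. [u ^ d = 1] (mod n)}"

lemma cnt_gcd: "d > 0 \<Longrightarrow> coprime d P \<Longrightarrow> cnt d = gcd d (P - 1)"
proof -
  assume d: "d > 0" "coprime d P"
  have "cnt d = gcd d (totient (P ^ m))" unfolding cnt_def P_def using card_roots_units[OF p oddp m d(1)] by simp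
  also have "totient (P ^ m) = P ^ (m - 1) * (P - 1)" using totient_prime_power[of P m] Pprime m by simp
  also have "gcd d (P ^ (m - 1) * (P - 1)) = gcd d (P - 1)" using d(2)
    by (intro gcd_mult_right_left_cancel) simp
  finally show ?thesis .
qed

lemma card_U: "int (card (units_mod n)) = p ^ (m - 1) * (p - 1)"
proof -
  have N1: "P ^ m > 1" using n1 pP by (metis of_nat_1 of_nat_less_iff of_nat_power)
  have "units_mod n = int ` totatives (P ^ m)" using units_mod_int[OF N1] pP by simp
  hence "card (units_mod n) = totient (P ^ m)" by (simp add: card_image totient_def)
  also have "\<dots> = P ^ (m - 1) * (P - 1)" using totient_prime_power[of P m] Pprime m by simp
  finally show ?thesis using pP prime_gt_0_int[OF p] by (simp add: of_nat_diff)
qed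

lemma orb_self: "x \<in> reduced_curves n \<Longrightarrow> x \<in> orb n x"
  unfolding orb_def using units_one[OF n1] act_one[of n x] R_box[of x n] n1
  by (metis image_eqI less_trans zero_less_one)

lemma orb_R: "x \<in> reduced_curves n \<Longrightarrow> orb n x \<subseteq> reduced_curves n"
proof
  fix y assume x: "x \<in> reduced_curves n" and "y \<in> orb n x"
  then obtain u where "u \<in> units_mod n" "y = act n u x" unfolding orb_def by auto
  thus "y \<in> reduced_curves n" using act_R[OF n1 x] by simp
qed

lemma orb_sub: "y \<in> orb n x \<Longrightarrow> orb n y \<subseteq> orb n x"
proof
  assume y: "y \<in> orb n x"
  then obtain u where u: "u \<in> units_mod n" "y = act n u x" unfolding orb_def by auto
  fix z assume "z \<in> orb n y"
  then obtain v where v: "v \<in> units_mod n" "z = act n v y" unfolding orb_def by auto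
  have "z = act n ((v * u) mod n) x" using u v by (simp add: act_mult)
  moreover have "(v * u) mod n \<in> units_mod n" using units_mult[OF n1 v(1) u(1)] .
  ultimately show "z \<in> orb n x" unfolding orb_def by blast
qed

lemma orb_same: "x \<in> reduced_curves n \<Longrightarrow> y \<in> orb n x \<Longrightarrow> orb n y = orb n x"
proof -
  assume x: "x \<in> reduced_curves n" and y: "y \<in> orb n x"
  then obtain u where u: "u \<in> units_mod n" "y = act n u x" unfolding orb_def by auto
  obtain w where w: "w \<in> units_mod n" "(w * u) mod n = 1" using units_inv[OF n1 u(1)] by metis
  have "act n w y = act n ((w * u) mod n) x" using u by (simp add: act_mult)
  also have "\<dots> = x" using w act_one[of n x] R_box[OF x] n1 by simp
  finally have "x \<in> orb n y" unfolding orb_def using w by (metis image_eqI)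
  thus ?thesis using orb_sub y by blast
qed

lemma CR_orb: "C_R n = card (orb n ` reduced_curves n)"
proof -
  have "reduced_curves n // curve_iso n = (\<lambda>x. curve_iso n `` {x}) ` reduced_curves n"
    unfolding quotient_def by auto
  also have "\<dots> = orb n ` reduced_curves n" using class_eq[OF n1] by (intro image_cong) auto
  finally show ?thesis unfolding C_R_def by simp
qed

lemma finite_R: "finite (reduced_curves n)"
  by (rule finite_subset[of _ "{0..<n} \<times> {0..<n}"]) (auto simp: reduced_curves_def)

lemma U_pos: "card (units_mod n) > 0"
proof -
  have "int (card (units_mod n)) > 0" unfolding card_U using prime_gt_1_int[OF p] by simp
  thus ?thesis by simp
qed

lemma real_CR: "real (C_R n) = (\<Sum>x\<in>reduced_curves n. real (card (stab n x))) / real (card (units_mod n))"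
proof -
  have "real (C_R n) = (\<Sum>x\<in>reduced_curves n. 1 / real (card (orb n x)))"
    unfolding CR_orb using finite_R orb_self orb_R orb_same by (rule count_classes)
  also have "\<dots> = (\<Sum>x\<in>reduced_curves n. real (card (stab n x)) / real (card (units_mod n)))"
  proof (rule sum.cong)
    fix x assume x: "x \<in> reduced_curves n"
    have e: "real (card (orb n x)) * real (card (stab n x)) = real (card (units_mod n))"
      using orbit_stab[OF n1 x] by (metis of_nat_mult)
    have "card (orb n x) > 0" using orb_self[OF x] finite_subset[OF orb_R[OF x] finite_R] by (auto simp: card_gt_0_iff)
    thus "1 / real (card (orb n x)) = real (card (stab n x)) / real (card (units_mod n))"
      using e U_pos by (auto simp: field_simps)
  qed simp
  finally show ?thesis by (simp add: sum_divide_distrib)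
qed

end



lemma gcd_case:
  fixes P :: nat assumes "P mod 12 = r" "r \<ge> 1" "d \<in> {2, 4, 6}"
  shows "gcd d (P - 1) = gcd d (r - 1)"
proof -
  define k where "k = P div 12"
  have "P = 12 * k + r" using assms(1) div_mult_mod_eq[of P 12] unfolding k_def by linarith
  hence "P - 1 = (12 div d * k) * d + (r - 1)" using assms(2,3) by auto
  thus ?thesis by (simp add: gcd_add_mult)
qed

context pm_setup begin

lemma P_odd: "odd P"
proof -
  have "odd (int P)" using oddp pP by simp
  thus ?thesis by simp
qed

lemma P6: "coprime P 6"
proof -
  have "coprime (int P) (int 6)" using p6 pP by simp
  thus ?thesis by (simp only: coprime_int_iff)
qed

lemma P_mod: "P mod 12 \<in> {1, 5, 7, 11}"
proof -
  define r where "r = P mod 12"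
  have r12: "r < 12" unfolding r_def by simp
  have o: "\<not> 2 dvd r" unfolding r_def using P_odd by (simp add: dvd_mod_iff)
  have "\<not> 3 dvd P"
  proof
    assume "3 dvd P"
    hence "is_unit (3::nat)" using coprime_common_divisor[OF P6, of 3] by simp
    thus False by simp
  qed
  hence t: "\<not> 3 dvd r" unfolding r_def by (simp add: dvd_mod_iff)
  have "r = 1 \<or> r = 5 \<or> r = 7 \<or> r = 11" using r12 o t by presburger
  hence "r \<in> {1, 5, 7, 11}" by simp
  thus ?thesis unfolding r_def .
qed

lemma cnt_vals:
  "cnt 2 = 2 \<and> cnt 4 = gcd 4 (P mod 12 - 1) \<and> cnt 6 = gcd 6 (P mod 12 - 1)"
proof -
  have c2a: "coprime 2 P" using P_odd by simp
  hence h: "coprime ((2::nat)^2) P" using coprime_power_left_iff[of "2::nat" 2 P] by blast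
  have "(2::nat)^2 = 4" by simp
  hence "coprime 4 P" using h by metis
  note c2 = c2a this
  have c6: "coprime 6 P" using P6 by (simp add: coprime_commute)
  have r1: "P mod 12 \<ge> 1" using P_mod by auto
  have "cnt 2 = gcd 2 (P mod 12 - 1)" using cnt_gcd[of 2] c2 gcd_case[OF refl r1, of 2] by simp
  also have "\<dots> = 2" using P_mod by (auto simp: gcd_non_0_nat)
  finally show ?thesis using cnt_gcd[of 4] cnt_gcd[of 6] c2 c6 gcd_case[OF refl r1, of 4] gcd_case[OF refl r1, of 6] by simp
qed

lemma stab_card:
  assumes x: "x \<in> reduced_curves n"
  shows "int (card (stab n x)) = 2 + (if snd x = 0 then int (cnt 4) - 2 else 0) + (if fst x = 0 then int (cnt 6) - 2 else 0)"
proof -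
  obtain a b where ab: "x = (a, b)" by (cases x)
  have xr: "(a, b) \<in> reduced_curves n" using x ab by simp
  show ?thesis
  proof (cases "b = 0")
    case True
    hence "a \<noteq> 0" using R_not_both[OF xr] by auto
    thus ?thesis using stab_b0[of a] xr True ab by (simp add: cnt_def)
  next
    case False
    show ?thesis
    proof (cases "a = 0")
      case True
      thus ?thesis using stab_a0[of b] xr False ab by (simp add: cnt_def)
    next
      case a0: False
      thus ?thesis using stab_gen[OF xr a0 False] False ab cnt_vals by (simp add: cnt_def)
    qed
  qed
qed

lemma n4: "\<not> p dvd 4"
proof
  assume "p dvd 4" hence "p dvd (2::int)^2" by simp
  thus False using n2 p prime_dvd_power by blast
qed

lemma n27: "\<not> p dvd 27"
proof
  assume "p dvd 27" hence "p dvd (3::int)^3" by simp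
  thus False using n3 p prime_dvd_power by blast
qed

lemma A0: "card {x \<in> reduced_curves n. snd x = 0} = card (units_mod n)"
proof -
  have key: "(a, 0) \<in> reduced_curves n \<longleftrightarrow> a \<in> units_mod n" for a
  proof -
    have "p dvd 4 * a^3 \<longleftrightarrow> p dvd a" using n4 p by (simp add: prime_dvd_mult_iff prime_dvd_power_iff)
    thus ?thesis using nonsing_iff[OF p p6 m, of a 0] cop_pm[OF p m, of a]
      by (auto simp: reduced_curves_def units_mod_def)
  qed
  have "{x \<in> reduced_curves n. snd x = 0} = (\<lambda>a. (a, 0)) ` units_mod n"
  proof
    show "{x \<in> reduced_curves n. snd x = 0} \<subseteq> (\<lambda>a. (a, 0)) ` units_mod n"
    proof
      fix x assume x: "x \<in> {x \<in> reduced_curves n. snd x = 0}"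
      then obtain a where "x = (a, 0)" by (cases x) auto
      thus "x \<in> (\<lambda>a. (a, 0)) ` units_mod n" using x key by auto
    qed
    show "(\<lambda>a. (a, 0)) ` units_mod n \<subseteq> {x \<in> reduced_curves n. snd x = 0}" using key by auto
  qed
  thus ?thesis by (simp add: card_image inj_on_def)
qed

lemma B0: "card {x \<in> reduced_curves n. fst x = 0} = card (units_mod n)"
proof -
  have key: "(0, b) \<in> reduced_curves n \<longleftrightarrow> b \<in> units_mod n" for b
  proof -
    have "p dvd 27 * b^2 \<longleftrightarrow> p dvd b" using n27 p by (simp add: prime_dvd_mult_iff prime_dvd_power_iff)
    thus ?thesis using nonsing_iff[OF p p6 m, of 0 b] cop_pm[OF p m, of b]
      by (auto simp: reduced_curves_def units_mod_def)
  qed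
  have "{x \<in> reduced_curves n. fst x = 0} = (\<lambda>b. (0, b)) ` units_mod n"
  proof
    show "{x \<in> reduced_curves n. fst x = 0} \<subseteq> (\<lambda>b. (0, b)) ` units_mod n"
    proof
      fix x assume x: "x \<in> {x \<in> reduced_curves n. fst x = 0}"
      then obtain b where "x = (0, b)" by (cases x) auto
      thus "x \<in> (\<lambda>b. (0, b)) ` units_mod n" using x key by auto
    qed
    show "(\<lambda>b. (0, b)) ` units_mod n \<subseteq> {x \<in> reduced_curves n. fst x = 0}" using key by auto
  qed
  thus ?thesis by (simp add: card_image inj_on_def)
qed

lemma sum_if_const:
  "(\<Sum>x\<in>A. if Q x then (k::int) else 0) = k * int (card {x \<in> A. Q x})" if "finite A"
  using sum.inter_filter[OF that, of "\<lambda>_. k" Q] by (simp add: mult.commute)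

lemma sum_stab:
  "(\<Sum>x\<in>reduced_curves n. int (card (stab n x)))
     = 2 * int (card (reduced_curves n)) + (int (cnt 4) + int (cnt 6) - 4) * int (card (units_mod n))"
proof -
  have "(\<Sum>x\<in>reduced_curves n. int (card (stab n x)))
     = (\<Sum>x\<in>reduced_curves n. 2 + (if snd x = 0 then int (cnt 4) - 2 else 0) + (if fst x = 0 then int (cnt 6) - 2 else 0))"
    using stab_card by (rule sum.cong[OF refl])
  also have "\<dots> = 2 * int (card (reduced_curves n)) + (int (cnt 4) - 2) * int (card {x \<in> reduced_curves n. snd x = 0})
      + (int (cnt 6) - 2) * int (card {x \<in> reduced_curves n. fst x = 0})"
    by (simp add: sum.distrib sum_if_const[OF finite_R])
  also have "\<dots> = 2 * int (card (reduced_curves n)) + (int (cnt 4) + int (cnt 6) - 4) * int (card (units_mod n))"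
    unfolding A0 B0 by (simp add: algebra_simps)
  finally show ?thesis .
qed

lemma main:
  "int (C_R n) = 2 * p ^ m + int (cnt 4) + int (cnt 6) - 4"
proof -
  define ph where "ph = card (units_mod n)"
  have ph0: "ph > 0" unfolding ph_def using U_pos .
  have "real (C_R n) * real ph = (\<Sum>x\<in>reduced_curves n. real (card (stab n x)))"
    using real_CR ph0 unfolding ph_def by (simp add: field_simps)
  also have "\<dots> = real_of_int (\<Sum>x\<in>reduced_curves n. int (card (stab n x)))" by simp
  finally have "real_of_int (int (C_R n) * int ph) = real_of_int (\<Sum>x\<in>reduced_curves n. int (card (stab n x)))"
    by simp
  hence e: "int (C_R n) * int ph = 2 * int (card (reduced_curves n)) + (int (cnt 4) + int (cnt 6) - 4) * int ph"
    unfolding sum_stab ph_def of_int_eq_iff .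
  have "int (card (reduced_curves n)) = p ^ m * int ph"
  proof -
    obtain k where k: "m = Suc k" using m by (cases m) auto
    have "int (card (reduced_curves n)) = p ^ (2 * m - 1) * (p - 1)" using card_R[OF p p6 m] .
    also have "\<dots> = p ^ m * (p ^ (m - 1) * (p - 1))"
    proof -
      have e: "2 * m - 1 = Suc (k + k)" "m - 1 = k" using k by auto
      show ?thesis unfolding e unfolding k by (simp add: power_add algebra_simps)
    qed
    finally show ?thesis unfolding ph_def card_U .
  qed
  hence "int (C_R n) * int ph = (2 * p ^ m + int (cnt 4) + int (cnt 6) - 4) * int ph"
    using e by (simp add: algebra_simps)
  thus ?thesis using ph0 by simp
qed

end

theorem theorem9:
  fixes p :: int and m :: nat
  assumes "prime p" and "coprime p 6" and "m \<ge> 1"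
  shows "int (C_R (p ^ m)) =
    (if [p = 1] (mod 12) then 2 * p ^ m + 6
     else if [p = 5] (mod 12) then 2 * p ^ m + 2
     else if [p = 7] (mod 12) then 2 * p ^ m + 4
     else 2 * p ^ m)"
proof -
  interpret pm_setup p m using assms by unfold_locales
  have cg: "[p = int r] (mod 12) \<longleftrightarrow> P mod 12 = r" if "r < 12" for r
    using that cong_int_iff[of P r 12] pP by (simp add: cong_def)
  have M: "int (C_R (p ^ m)) = 2 * p ^ m + int (gcd 4 (P mod 12 - 1)) + int (gcd 6 (P mod 12 - 1)) - 4"
    using main cnt_vals by simp
  have c1: "[p = 1] (mod 12) \<longleftrightarrow> P mod 12 = 1" using cg[of 1] by simp
  have c5: "[p = 5] (mod 12) \<longleftrightarrow> P mod 12 = 5" using cg[of 5] by simp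
  have c7: "[p = 7] (mod 12) \<longleftrightarrow> P mod 12 = 7" using cg[of 7] by simp
  show ?thesis using P_mod M c1 c5 c7 by (auto simp: gcd_non_0_nat)
qed



end
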